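(* Let $M=\mathbb{R}^{1,1}$ be the two-dimensional Minkowski plane with canonical coordinates $(x^0,x^1)$, light-cone coordinates $u=x^0+x^1$, $v=x^0-x^1$, and causal order $x\le_M y$ iff $u(x)\le u(y)$ and $v(x)\le v(y)$. Let $\tilde{\mathcal{A}}_M$ be the linear span of smooth bounded real functions on $M$ with bounded derivatives which are causal (non-decreasing for $\le_M$), and $\tilde{\mathcal{A}}=\tilde{\mathcal{A}}_M\otimes M_2(\mathbb{C})$. Fix real numbers $d_1,d_2$ and $D_F=\mathrm{diag}(d_1,d_2)$. Let $\mathcal{C}$ be the set of self-adjoint $\alpha\in\tilde{\mathcal{A}}$ (smooth functions $M\to M_2(\mathbb{C})$ with Hermitian values) such that at every point of $M$ the $4\times 4$ Hermitian matrix $$\begin{pmatrix}2\partial_u\alpha & [D_F,\alpha]\\ -[D_F,\alpha] & 2\partial_v\alpha\end{pmatrix}$$ is positive semidefinite. Then for all $x,y\in M$: $$x\le_M y\iff \alpha(x)\le\alpha(y)\text{ (as Hermitian matrices) for all }\alpha\in\mathcal{C}.$$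
   Context: The displayed positivity condition is the pointwise form of the condition $j[D,\alpha]\le 0$ for the product Lorentzian spectral triple with $D=D_M\otimes 1+\gamma^0\gamma^1\otimes D_F$, $D_M=-i\gamma^\mu\partial_\mu$, $j=i\gamma^0\otimes 1$, $\gamma_0=\begin{pmatrix}0&i\\ i&0\end{pmatrix}$, $\gamma_1=\begin{pmatrix}0&-i\\ i&0\end{pmatrix}$; $\mathcal{C}$ is the resulting causal cone. For Hermitian matrices, $A\le B$ means $B-A$ is positive semidefinite. *)

theory Defs
  imports "HOL-Analysis.Analysis"
begin

type_synonym point = "real \<times> real"

definition lc_u :: "point \<Rightarrow> real" where "lc_u p = fst p + snd p"
definition lc_v :: "point \<Rightarrow> real" where "lc_v p = fst p - snd p"

definition causal_le :: "point \<Rightarrow> point \<Rightarrow> bool" where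
  "causal_le x y \<longleftrightarrow> lc_u x \<le> lc_u y \<and> lc_v x \<le> lc_v y"

definition dir_deriv :: "(point \<Rightarrow> 'b::real_normed_vector) \<Rightarrow> point \<Rightarrow> point \<Rightarrow> 'b" where
  "dir_deriv g e p = vector_derivative (\<lambda>t. g (p + t *\<^sub>R e)) (at 0)"

text \<open>Light-cone derivatives: x0 = (u+v)/2, x1 = (u-v)/2.\<close>
definition d_u :: "(point \<Rightarrow> 'b::real_normed_vector) \<Rightarrow> point \<Rightarrow> 'b" where
  "d_u g = dir_deriv g (1/2, 1/2)"
definition d_v :: "(point \<Rightarrow> 'b::real_normed_vector) \<Rightarrow> point \<Rightarrow> 'b" where
  "d_v g = dir_deriv g (1/2, -1/2)"

fun iter_partial :: "bool list \<Rightarrow> (point \<Rightarrow> real) \<Rightarrow> point \<Rightarrow> real" where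
  "iter_partial [] f = f"
| "iter_partial (b # w) f = dir_deriv (iter_partial w f) (if b then (1, 0) else (0, 1))"

definition smooth_bdd :: "(point \<Rightarrow> real) \<Rightarrow> bool" where
  "smooth_bdd f \<longleftrightarrow> (\<forall>w. (\<forall>p. iter_partial w f differentiable (at p))
                         \<and> bounded (range (iter_partial w f)))"

definition causal_fun :: "(point \<Rightarrow> real) \<Rightarrow> bool" where
  "causal_fun f \<longleftrightarrow> (\<forall>x y. causal_le x y \<longrightarrow> f x \<le> f y)"

definition AM_gen :: "(point \<Rightarrow> real) \<Rightarrow> bool" where
  "AM_gen f \<longleftrightarrow> smooth_bdd f \<and> causal_fun f"

type_synonym cmat2 = "complex^2^2"

text \<open>The algebra (span of A_M generators) tensor M_2(C): finite sums of f_j (x) A_j.\<close>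
definition tildeA :: "(point \<Rightarrow> cmat2) set" where
  "tildeA = {\<alpha>. \<exists>(n::nat) (fs :: nat \<Rightarrow> point \<Rightarrow> real) (As :: nat \<Rightarrow> cmat2). (\<forall>j<n. AM_gen (fs j)) \<and>
                 \<alpha> = (\<lambda>x. \<Sum>j<n. fs j x *\<^sub>R As j)}"

definition hermitian :: "complex^'n^'n \<Rightarrow> bool" where
  "hermitian A \<longleftrightarrow> (\<forall>i j. A $ i $ j = cnj (A $ j $ i))"

definition psd :: "complex^'n^'n \<Rightarrow> bool" where
  "psd A \<longleftrightarrow> hermitian A \<and>
     (\<forall>z :: complex^'n. 0 \<le> Re (\<Sum>i\<in>UNIV. \<Sum>j\<in>UNIV. cnj (z $ i) * A $ i $ j * z $ j))"

definition herm_le :: "complex^'n^'n \<Rightarrow> complex^'n^'n \<Rightarrow> bool" where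
  "herm_le A B \<longleftrightarrow> psd (B - A)"

definition DF :: "real \<Rightarrow> real \<Rightarrow> cmat2" where
  "DF d1 d2 = (\<chi> i j. if i = j then (if i = 1 then complex_of_real d1 else complex_of_real d2) else 0)"

definition commutator :: "cmat2 \<Rightarrow> cmat2 \<Rightarrow> cmat2" where
  "commutator A B = A ** B - B ** A"

definition block4 :: "cmat2 \<Rightarrow> cmat2 \<Rightarrow> cmat2 \<Rightarrow> cmat2 \<Rightarrow> complex^(2+2)^(2+2)" where
  "block4 P Q R S = (\<chi> a b. case a of
       Inl i \<Rightarrow> (case b of Inl j \<Rightarrow> P $ i $ j | Inr j \<Rightarrow> Q $ i $ j)
     | Inr i \<Rightarrow> (case b of Inl j \<Rightarrow> R $ i $ j | Inr j \<Rightarrow> S $ i $ j))"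

definition causal_cone :: "real \<Rightarrow> real \<Rightarrow> (point \<Rightarrow> cmat2) set" where
  "causal_cone d1 d2 = {\<alpha> \<in> tildeA. (\<forall>x. hermitian (\<alpha> x)) \<and>
     (\<forall>x. psd (block4 (2 *\<^sub>R d_u \<alpha> x) (commutator (DF d1 d2) (\<alpha> x))
                      (- commutator (DF d1 d2) (\<alpha> x)) (2 *\<^sub>R d_v \<alpha> x)))}"

end

theory Submission
  imports Defs "HOL-Computational_Algebra.Polynomial"
begin


definition qf :: "complex^'n \<Rightarrow> complex^'n^'n \<Rightarrow> real" where
  "qf z M = Re (\<Sum>i\<in>UNIV. \<Sum>j\<in>UNIV. cnj (z $ i) * M $ i $ j * z $ j)"

lemma psd_qf: "psd M \<longleftrightarrow> hermitian M \<and> (\<forall>z. 0 \<le> qf z M)"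
  by (simp add: psd_def qf_def)

lemma qf_linear: fixes z :: "complex^'n" shows "linear (qf z)"
proof (rule linearI)
  fix a b :: "complex^'n^'n"
  show "qf z (a + b) = qf z a + qf z b"
    by (simp add: qf_def algebra_simps sum.distrib)
next
  fix r :: real and a :: "complex^'n^'n"
  have e: "cnj (z $ i) * (r *\<^sub>R a) $ i $ j * z $ j = complex_of_real r * (cnj (z $ i) * a $ i $ j * z $ j)" for i j
    by (simp only: vector_scaleR_component) (simp add: scaleR_conv_of_real)
  have "qf z (r *\<^sub>R a) = Re (complex_of_real r * (\<Sum>i\<in>UNIV. \<Sum>j\<in>UNIV. cnj (z $ i) * a $ i $ j * z $ j))"
    unfolding qf_def e by (simp only: sum_distrib_left)
  then show "qf z (r *\<^sub>R a) = r *\<^sub>R qf z a"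
    by (simp add: qf_def)
qed

lemma qf_bl: fixes z :: "complex^'n" shows "bounded_linear (qf z)"
  using qf_linear linear_conv_bounded_linear by blast

lemma line_deriv:
  fixes g :: "point \<Rightarrow> 'b::real_normed_vector"
  assumes "g differentiable (at (q + t0 *\<^sub>R e))"
  shows "((\<lambda>t. g (q + t *\<^sub>R e)) has_vector_derivative dir_deriv g e (q + t0 *\<^sub>R e)) (at t0)"
proof -
  obtain g' where D: "(g has_derivative g') (at (q + t0 *\<^sub>R e))"
    using assms by (auto simp: differentiable_def)
  have L: "((\<lambda>t. p + t *\<^sub>R e) has_derivative (\<lambda>s. s *\<^sub>R e)) (at t)" for p and t :: real
    by (auto intro!: derivative_eq_intros)
  have lin: "g' (s *\<^sub>R e) = s *\<^sub>R g' e" for s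
    using D has_derivative_bounded_linear linear_scale linear_simps(5) by blast
  have C: "((\<lambda>t. g (p + t *\<^sub>R e)) has_vector_derivative g' e) (at t1)"
    if "p + t1 *\<^sub>R e = q + t0 *\<^sub>R e" for p t1
  proof -
    have "((\<lambda>t. g (p + t *\<^sub>R e)) has_derivative (\<lambda>s. g' (s *\<^sub>R e))) (at t1)"
      using has_derivative_compose[OF L[of p t1]] D that by (simp add: o_def)
    then show ?thesis by (simp add: has_vector_derivative_def lin)
  qed
  have "dir_deriv g e (q + t0 *\<^sub>R e) = g' e"
    unfolding dir_deriv_def by (rule vector_derivative_at, rule C) simp
  then show ?thesis using C[of q t0] by simp
qed

lemma mono_line:
  fixes \<alpha> :: "point \<Rightarrow> complex^'n^'n"
  assumes "\<forall>p. \<alpha> differentiable (at p)" "\<forall>p. 0 \<le> qf z (dir_deriv \<alpha> e p)" "0 \<le> T"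
  shows "qf z (\<alpha> q) \<le> qf z (\<alpha> (q + T *\<^sub>R e))"
proof -
  let ?h = "\<lambda>t. qf z (\<alpha> (q + t *\<^sub>R e))"
  have "?h 0 \<le> ?h T"
  proof (rule DERIV_nonneg_imp_nondecreasing[OF assms(3)])
    fix x assume "0 \<le> x" "x \<le> T"
    have "(?h has_vector_derivative qf z (dir_deriv \<alpha> e (q + x *\<^sub>R e))) (at x)"
      by (rule bounded_linear.has_vector_derivative[OF qf_bl line_deriv]) (rule assms(1)[rule_format])
    then show "\<exists>y. (?h has_real_derivative y) (at x) \<and> 0 \<le> y"
      using assms(2) has_real_derivative_iff_has_vector_derivative by blast
  qed
  then show ?thesis by simp
qed

lemma sum_UNIV_plus:
  "(\<Sum>a\<in>(UNIV::('a::finite+'b::finite) set). F a) = (\<Sum>i\<in>UNIV. F (Inl i)) + (\<Sum>i\<in>UNIV. F (Inr i))"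
proof -
  have "sum F (UNIV::('a+'b) set) = sum F (UNIV <+> UNIV)" by simp
  also have "\<dots> = (\<Sum>i\<in>UNIV. F (Inl i)) + (\<Sum>i\<in>UNIV. F (Inr i))"
    by (subst sum.Plus) (auto simp: o_def)
  finally show ?thesis .
qed

lemma qf_block_P:
  assumes "psd (block4 P Q R S)" shows "0 \<le> qf z P"
proof -
  define z' :: "complex^(2+2)" where "z' = (\<chi> a. case a of Inl i \<Rightarrow> z $ i | Inr i \<Rightarrow> 0)"
  have "0 \<le> qf z' (block4 P Q R S)" using assms by (simp add: psd_qf)
  also have "qf z' (block4 P Q R S) = qf z P"
    unfolding qf_def z'_def block4_def
    by (rule arg_cong[where f=Re]) (simp add: sum_UNIV_plus)
  finally show ?thesis .
qed

lemma qf_block_S: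
  assumes "psd (block4 P Q R S)" shows "0 \<le> qf z S"
proof -
  define z' :: "complex^(2+2)" where "z' = (\<chi> a. case a of Inl i \<Rightarrow> 0 | Inr i \<Rightarrow> z $ i)"
  have "0 \<le> qf z' (block4 P Q R S)" using assms by (simp add: psd_qf)
  also have "qf z' (block4 P Q R S) = qf z S"
    unfolding qf_def z'_def block4_def
    by (rule arg_cong[where f=Re]) (simp add: sum_UNIV_plus)
  finally show ?thesis .
qed

lemma tildeA_diff: "\<alpha> \<in> tildeA \<Longrightarrow> \<alpha> differentiable (at p)"
  unfolding tildeA_def AM_gen_def smooth_bdd_def
proof clarify
  fix n and fs :: "nat \<Rightarrow> point \<Rightarrow> real" and As :: "nat \<Rightarrow> cmat2"
  assume H: "\<forall>j<n. (\<forall>w. (\<forall>p. iter_partial w (fs j) differentiable at p) \<and> bounded (range (iter_partial w (fs j)))) \<and> causal_fun (fs j)"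
  have "fs j differentiable (at p)" if "j < n" for j
    using H that by (metis iter_partial.simps(1))
  then show "(\<lambda>x. \<Sum>j<n. fs j x *\<^sub>R As j) differentiable at p"
    by (auto intro!: differentiable_sum differentiable_scaleR)
qed



definition Lf :: "real \<Rightarrow> real \<Rightarrow> point \<Rightarrow> real" where "Lf a b p = a * fst p + b * snd p"

lemma Lf_line: "Lf a b (p + t *\<^sub>R e) = Lf a b p + t * Lf a b e"
  by (simp add: Lf_def algebra_simps)

lemma polytanh_deriv:
  "((\<lambda>s. poly Q (tanh s)) has_real_derivative poly (pderiv Q * [:1,0,-1:]) (tanh s)) (at s)"
proof -
  have "((\<lambda>s. poly Q (tanh s)) has_real_derivative poly (pderiv Q) (tanh s) * ((1 - (tanh s)\<^sup>2) * 1)) (at s)"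
    by (rule DERIV_chain2[OF poly_DERIV]) (auto intro!: derivative_eq_intros simp: cosh_real_pos[THEN less_imp_neq, symmetric])
  then show ?thesis by (simp add: power2_eq_square algebra_simps)
qed

lemma polytanh_dir:
  "dir_deriv (\<lambda>p. poly Q (tanh (Lf a b p))) e p
     = poly (smult (Lf a b e) (pderiv Q * [:1,0,-1:])) (tanh (Lf a b p))"
proof -
  have "((\<lambda>t. poly Q (tanh (Lf a b p + t * Lf a b e))) has_real_derivative
          poly (pderiv Q * [:1,0,-1:]) (tanh (Lf a b p + 0 * Lf a b e)) * (0 + 1 * Lf a b e)) (at 0)"
    by (rule DERIV_chain2[OF polytanh_deriv]) (auto intro!: derivative_eq_intros)
  then have "((\<lambda>t. poly Q (tanh (Lf a b (p + t *\<^sub>R e)))) has_vector_derivative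
          poly (smult (Lf a b e) (pderiv Q * [:1,0,-1:])) (tanh (Lf a b p))) (at 0)"
    by (simp add: Lf_line has_real_derivative_iff_has_vector_derivative mult.commute)
  then show ?thesis unfolding dir_deriv_def by (rule vector_derivative_at)
qed

lemma polytanh_iter:
  "\<exists>Q'. iter_partial w (\<lambda>p. poly Q (tanh (Lf a b p))) = (\<lambda>p. poly Q' (tanh (Lf a b p)))"
proof (induction w)
  case Nil then show ?case by auto
next
  case (Cons c w)
  then obtain Q' where "iter_partial w (\<lambda>p. poly Q (tanh (Lf a b p))) = (\<lambda>p. poly Q' (tanh (Lf a b p)))" by blast
  then have "iter_partial (c # w) (\<lambda>p. poly Q (tanh (Lf a b p))) = dir_deriv (\<lambda>p. poly Q' (tanh (Lf a b p))) (if c then (1,0) else (0,1))"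
    by simp
  also have "\<dots> = (\<lambda>p. poly (smult (Lf a b (if c then (1,0) else (0,1))) (pderiv Q' * [:1,0,-1:])) (tanh (Lf a b p)))"
    by (rule ext, rule polytanh_dir)
  finally show ?case by blast
qed

lemma polytanh_diff: "(\<lambda>p. poly Q (tanh (Lf a b p))) differentiable (at p)"
proof -
  have "(\<lambda>s. poly Q (tanh s)) \<circ> Lf a b differentiable (at p)"
  proof (rule differentiable_chain_at)
    have "linear (Lf a b)" by (rule linearI) (auto simp: Lf_def algebra_simps)
    then show "Lf a b differentiable at p"
      by (simp add: linear_conv_bounded_linear bounded_linear_imp_differentiable)
    show "(\<lambda>s. poly Q (tanh s)) differentiable at (Lf a b p)"
      using polytanh_deriv real_differentiable_def by blast
  qed
  then show ?thesis by (simp add: o_def)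
qed

lemma polytanh_bdd: "bounded (range (\<lambda>p. poly Q (tanh (Lf a b p))))"
proof -
  have "compact ((\<lambda>t. poly Q t) ` {-1..1})"
    by (rule compact_continuous_image) (auto intro!: continuous_on_poly continuous_on_id)
  moreover have "range (\<lambda>p. poly Q (tanh (Lf a b p))) \<subseteq> (\<lambda>t. poly Q t) ` {-1..1}"
  proof (rule image_subsetI)
    fix p
    have "tanh (Lf a b p) \<in> {-1..1}"
      using tanh_real_lt_1[of "Lf a b p"] tanh_real_gt_neg1[of "Lf a b p"] by simp
    then show "poly Q (tanh (Lf a b p)) \<in> (\<lambda>t. poly Q t) ` {-1..1}" by (rule imageI)
  qed
  ultimately show ?thesis using compact_imp_bounded bounded_subset by blast
qed

lemma tanh_smooth: "smooth_bdd (\<lambda>p. tanh (Lf a b p))"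
proof -
  have e: "(\<lambda>p. tanh (Lf a b p)) = (\<lambda>p. poly [:0,1:] (tanh (Lf a b p)))" by simp
  show ?thesis unfolding smooth_bdd_def e
  proof (intro allI conjI)
    fix w
    obtain Q' where q: "iter_partial w (\<lambda>p. poly [:0,1:] (tanh (Lf a b p))) = (\<lambda>p. poly Q' (tanh (Lf a b p)))"
      using polytanh_iter by blast
    show "bounded (range (iter_partial w (\<lambda>p. poly [:0, 1:] (tanh (Lf a b p)))))"
      unfolding q by (rule polytanh_bdd)
    fix p
    show "iter_partial w (\<lambda>p. poly [:0, 1:] (tanh (Lf a b p))) differentiable at p"
      unfolding q by (rule polytanh_diff)
  qed
qed

lemma tanh_dir: "dir_deriv (\<lambda>p. tanh (Lf a b p)) e p = Lf a b e * (1 - (tanh (Lf a b p))\<^sup>2)"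
proof -
  have e: "(\<lambda>p. tanh (Lf a b p)) = (\<lambda>p. poly [:0,1:] (tanh (Lf a b p)))" by simp
  show ?thesis unfolding e polytanh_dir by (simp add: pderiv_pCons power2_eq_square algebra_simps)
qed



definition I2 :: cmat2 where "I2 = (\<chi> i j. if i = j then 1 else 0)"

lemma qf_scale: "qf z (c *\<^sub>R M) = c * qf z M"
  using linear_scale[OF qf_linear] by simp

lemma qf_I2: "qf z I2 = (\<Sum>i\<in>UNIV. (cmod (z $ i))\<^sup>2)"
proof -
  have "qf z I2 = Re (\<Sum>i\<in>UNIV. cnj (z $ i) * z $ i)"
  proof -
    have e: "cnj (z $ i) * I2 $ i $ j * z $ j = (if i = j then cnj (z $ i) * z $ j else 0)" for i j
      by (simp add: I2_def)
    show ?thesis unfolding qf_def e by (simp add: sum.delta)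
  qed
  also have "\<dots> = (\<Sum>i\<in>UNIV. (cmod (z $ i))\<^sup>2)"
    by (simp add: Re_sum complex_mult_cnj mult.commute[of "cnj _"] cmod_power2)
  finally show ?thesis .
qed

lemma herm_sI2: "hermitian (c *\<^sub>R I2)"
  by (simp add: hermitian_def I2_def)

lemma comm_sI2: "commutator A (c *\<^sub>R I2) = 0"
proof -
  have e1: "A $ i $ k * (c *\<^sub>R I2) $ k $ j = (if k = j then c *\<^sub>R A $ i $ j else 0)" for i j k
    by (simp only: vector_scaleR_component) (simp add: I2_def scaleR_conv_of_real)
  have e2: "(c *\<^sub>R I2) $ i $ k * A $ k $ j = (if k = i then c *\<^sub>R A $ i $ j else 0)" for i j k
    by (simp only: vector_scaleR_component) (simp add: I2_def scaleR_conv_of_real)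
  show ?thesis
    unfolding commutator_def matrix_matrix_mult_def e1 e2 by (simp add: vec_eq_iff sum.delta)
qed

lemma qf_block_diag:
  "qf z (block4 P 0 0 S) = qf (\<chi> i. z $ Inl i) P + qf (\<chi> i. z $ Inr i) S"
proof -
  have "qf z (block4 P 0 0 S) = Re ((\<Sum>i\<in>UNIV. \<Sum>j\<in>UNIV. cnj ((\<chi> i. z $ Inl i) $ i) * P $ i $ j * (\<chi> i. z $ Inl i) $ j)
     + (\<Sum>i\<in>UNIV. \<Sum>j\<in>UNIV. cnj ((\<chi> i. z $ Inr i) $ i) * S $ i $ j * (\<chi> i. z $ Inr i) $ j))"
    unfolding qf_def block4_def by (rule arg_cong[where f=Re]) (simp add: sum_UNIV_plus)
  then show ?thesis by (simp only: plus_complex.sel qf_def)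
qed

lemma psd_diag: "0 \<le> c \<Longrightarrow> 0 \<le> d \<Longrightarrow> psd (block4 (c *\<^sub>R I2) 0 0 (d *\<^sub>R I2))"
  unfolding psd_qf
proof (intro conjI allI)
  show "hermitian (block4 (c *\<^sub>R I2) 0 0 (d *\<^sub>R I2))"
    unfolding hermitian_def block4_def I2_def by (auto split: sum.splits)
  fix z :: "complex^(2+2)"
  assume "0 \<le> c" "0 \<le> d"
  then show "0 \<le> qf z (block4 (c *\<^sub>R I2) 0 0 (d *\<^sub>R I2))"
    by (simp add: qf_block_diag qf_scale qf_I2 sum_nonneg)
qed

lemma dir_scaleC:
  fixes g :: "point \<Rightarrow> real"
  assumes "g differentiable (at p)"
  shows "dir_deriv (\<lambda>p. g p *\<^sub>R C) e p = dir_deriv g e p *\<^sub>R C"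
proof -
  have "((\<lambda>t. g (p + t *\<^sub>R e)) has_vector_derivative dir_deriv g e (p + 0 *\<^sub>R e)) (at 0)"
    by (rule line_deriv) (use assms in simp)
  then have "((\<lambda>t. g (p + t *\<^sub>R e) *\<^sub>R C) has_vector_derivative dir_deriv g e p *\<^sub>R C) (at 0)"
    using bounded_linear.has_vector_derivative[OF bounded_linear_scaleR_left] by fastforce
  then show ?thesis unfolding dir_deriv_def by (rule vector_derivative_at)
qed

lemma cone_mem:
  assumes "causal_fun (\<lambda>p. tanh (Lf a b p))" "0 \<le> Lf a b (1/2, 1/2)" "0 \<le> Lf a b (1/2, -1/2)"
  shows "(\<lambda>p. tanh (Lf a b p) *\<^sub>R I2) \<in> causal_cone d1 d2"
  unfolding causal_cone_def
proof (intro CollectI conjI allI)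
  show "(\<lambda>p. tanh (Lf a b p) *\<^sub>R I2) \<in> tildeA"
    unfolding tildeA_def
    by (rule CollectI, rule exI[of _ 1], rule exI[of _ "\<lambda>_ p. tanh (Lf a b p)"], rule exI[of _ "\<lambda>_. I2"])
       (simp add: AM_gen_def tanh_smooth assms(1))
  fix x
  show "hermitian (tanh (Lf a b x) *\<^sub>R I2)" by (rule herm_sI2)
  have d: "dir_deriv (\<lambda>p. tanh (Lf a b p) *\<^sub>R I2) e x = (Lf a b e * (1 - (tanh (Lf a b x))\<^sup>2)) *\<^sub>R I2" for e
    using dir_scaleC[OF polytanh_diff[of "[:0,1:]", simplified]] tanh_dir by simp
  have t: "0 \<le> 1 - (tanh (Lf a b x))\<^sup>2"
    using tanh_real_lt_1[of "Lf a b x"] tanh_real_gt_neg1[of "Lf a b x"]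
    by (simp add: abs_square_le_1 abs_le_iff less_imp_le)
  show "psd (block4 (2 *\<^sub>R d_u (\<lambda>p. tanh (Lf a b p) *\<^sub>R I2) x)
               (commutator (DF d1 d2) (tanh (Lf a b x) *\<^sub>R I2))
               (- commutator (DF d1 d2) (tanh (Lf a b x) *\<^sub>R I2))
               (2 *\<^sub>R d_v (\<lambda>p. tanh (Lf a b p) *\<^sub>R I2) x))"
    unfolding d_u_def d_v_def d comm_sI2 scaleR_scaleR minus_zero
    by (rule psd_diag) (use assms t in simp_all)
qed



lemma forward:
  assumes "causal_le x y" "\<alpha> \<in> causal_cone d1 d2"
  shows "herm_le (\<alpha> x) (\<alpha> y)"
proof -
  have A: "\<alpha> \<in> tildeA" and H: "\<And>p. hermitian (\<alpha> p)"
    and P: "\<And>p. psd (block4 (2 *\<^sub>R d_u \<alpha> p) (commutator (DF d1 d2) (\<alpha> p))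
                      (- commutator (DF d1 d2) (\<alpha> p)) (2 *\<^sub>R d_v \<alpha> p))"
    using assms(2) unfolding causal_cone_def by auto
  have diff: "\<forall>p. \<alpha> differentiable (at p)" using tildeA_diff[OF A] by blast
  have du: "\<forall>p. 0 \<le> qf z (dir_deriv \<alpha> (1/2, 1/2) p)" for z
  proof
    fix p
    have "0 \<le> qf z (2 *\<^sub>R d_u \<alpha> p)" by (rule qf_block_P[OF P])
    then show "0 \<le> qf z (dir_deriv \<alpha> (1/2, 1/2) p)" by (simp add: qf_scale d_u_def)
  qed
  have dv: "\<forall>p. 0 \<le> qf z (dir_deriv \<alpha> (1/2, -1/2) p)" for z
  proof
    fix p
    have "0 \<le> qf z (2 *\<^sub>R d_v \<alpha> p)" by (rule qf_block_S[OF P])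
    then show "0 \<le> qf z (dir_deriv \<alpha> (1/2, -1/2) p)" by (simp add: qf_scale d_v_def)
  qed
  define m where "m = x + (lc_u y - lc_u x) *\<^sub>R ((1/2, 1/2) :: point)"
  have ym: "y = m + (lc_v y - lc_v x) *\<^sub>R ((1/2, -1/2) :: point)"
    unfolding m_def lc_u_def lc_v_def by (cases x, cases y) (simp add: field_simps)
  have u: "0 \<le> lc_u y - lc_u x" and v: "0 \<le> lc_v y - lc_v x"
    using assms(1) unfolding causal_le_def by auto
  have "qf z (\<alpha> x) \<le> qf z (\<alpha> y)" for z
  proof -
    have "qf z (\<alpha> x) \<le> qf z (\<alpha> m)" unfolding m_def by (rule mono_line[OF diff du u])
    also have "\<dots> \<le> qf z (\<alpha> y)"
      using mono_line[OF diff dv v, of z m] by (simp only: ym[symmetric])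
    finally show ?thesis .
  qed
  then have "0 \<le> qf z (\<alpha> y - \<alpha> x)" for z
    by (simp add: linear_diff[OF qf_linear])
  moreover have "hermitian (\<alpha> y - \<alpha> x)"
    unfolding hermitian_def
  proof (intro allI)
    fix i j
    have "\<alpha> y $ i $ j = cnj (\<alpha> y $ j $ i)" "\<alpha> x $ i $ j = cnj (\<alpha> x $ j $ i)"
      using H[of y] H[of x] unfolding hermitian_def by blast+
    then show "(\<alpha> y - \<alpha> x) $ i $ j = cnj ((\<alpha> y - \<alpha> x) $ j $ i)"
      by (simp only: vector_minus_component complex_cnj_diff)
  qed
  ultimately show ?thesis unfolding herm_le_def psd_qf by blast
qed

lemma not_herm_le:
  assumes "c < 0" shows "\<not> psd (c *\<^sub>R I2)"
proof
  assume "psd (c *\<^sub>R I2)"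
  then have "0 \<le> qf (\<chi> i. 1) (c *\<^sub>R I2)" unfolding psd_qf by blast
  then show False using assms by (simp add: qf_scale qf_I2 mult_le_0_iff)
qed

lemma backward:
  assumes "\<forall>\<alpha>\<in>causal_cone d1 d2. herm_le (\<alpha> x) (\<alpha> y)"
  shows "causal_le x y"
proof -
  have key: "Lf a b x \<le> Lf a b y"
    if c: "causal_fun (\<lambda>p. tanh (Lf a b p))" "0 \<le> Lf a b (1/2, 1/2)" "0 \<le> Lf a b (1/2, -1/2)" for a b
  proof (rule ccontr)
    assume "\<not> Lf a b x \<le> Lf a b y"
    then have lt: "tanh (Lf a b y) - tanh (Lf a b x) < 0" by simp
    have "herm_le (tanh (Lf a b x) *\<^sub>R I2) (tanh (Lf a b y) *\<^sub>R I2)"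
      using assms cone_mem[OF c] by fastforce
    then have "psd ((tanh (Lf a b y) - tanh (Lf a b x)) *\<^sub>R I2)"
      unfolding herm_le_def by (simp add: scaleR_left_diff_distrib)
    then show False using not_herm_le[OF lt] by blast
  qed
  have Lu: "Lf 1 1 = lc_u" by (auto simp: Lf_def lc_u_def)
  have Lv: "Lf 1 (-1) = lc_v" by (auto simp: Lf_def lc_v_def)
  have "lc_u x \<le> lc_u y"
    using key[of 1 1] unfolding Lu
    by (auto simp: causal_fun_def causal_le_def lc_u_def)
  moreover have "lc_v x \<le> lc_v y"
    using key[of 1 "-1"] unfolding Lv
    by (auto simp: causal_fun_def causal_le_def lc_v_def)
  ultimately show ?thesis unfolding causal_le_def by blast
qed

theorem mainTheorem2:
  fixes d1 d2 :: real and x y :: point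
  shows "causal_le x y \<longleftrightarrow> (\<forall>\<alpha>\<in>causal_cone d1 d2. herm_le (\<alpha> x) (\<alpha> y))"
  using forward backward by blast

end
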